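(* Let $(X,Y,\phi)$ be an $L$-context and $X'\subseteq X$, $Y'\subseteq Y$. With $S_1,S_2\colon\mathcal{K}\phi\to\mathcal{K}\phi_{X',Y'}$ and $F_1,F_2\colon\mathcal{K}\phi_{X',Y'}\to\mathcal{K}\phi$ defined by $S_1\mu=(\phi_{X',Y'})^\forall(\phi_{X',Y'})^\exists\mu_{X'}$, $S_2\mu=\big((\phi_{X,Y'})^\forall(\phi_{X,Y'})^\exists\mu\big)_{X'}$, $F_1\mu'=\phi^\forall\phi^\exists\underline{\mu'}$, $F_2\mu'=(\phi_{X,Y'})^\forall(\phi_{X,Y'})^\exists\underline{\mu'}$, the following are equivalent: (i) $S_1$ is an isomorphism of complete $L$-lattices; (ii) $S_2$ is an isomorphism of complete $L$-lattices; (iii) $F_1$ is an isomorphism of complete $L$-lattices; (iv) $F_2$ is an isomorphism of complete $L$-lattices.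
   Context: $L=(L,* )$ is a complete residuated lattice: a complete lattice with bottom $0$ and top $1$, equipped with a commutative associative operation $*$ with unit $1$ satisfying $a*\bigvee_i b_i=\bigvee_i a*b_i$; $\to$ is its residuum ($a*b\le c\iff a\le b\to c$). An $L$-context is a triple $(X,Y,\phi)$ with $X,Y$ sets and $\phi\colon X\times Y\to L$. $L^X$ is the set of maps $X\to L$ with $L$-order $L^X(\mu,\mu')=\bigwedge_{x}(\mu(x)\to\mu'(x))$. $(\phi^\exists\mu)(y)=\bigvee_{x\in X}\mu(x)*\phi(x,y)$, $(\phi^\forall\lambda)(x)=\bigwedge_{y\in Y}(\phi(x,y)\to\lambda(y))$. $\mathcal{K}\phi=\{\mu\in L^X\mid\phi^\forall\phi^\exists\mu=\mu\}$, with the $L$-order inherited from $L^X$; it is a complete $L$-lattice. $\phi_{X',Y'}$ is the restriction of $\phi$ to $X'\times Y'$; $\mu_{X'}$ the restriction of $\mu$ to $X'$; $\underline{\mu'}\in L^X$ the extension of $\mu'\in L^{X'}$ by $0$. An isomorphism of complete $L$-lattices is a bijection $f$ that is $L$-isometric, i.e. $P(p,p')=Q(fp,fp')$ for all $p,p'$. *)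

theory Defs
  imports Main
begin

text \<open>Complete residuated lattice structure on a complete lattice 'l:
  tn is the monoidal operation *, imp its residuum.\<close>
definition crl :: "('l::complete_lattice \<Rightarrow> 'l \<Rightarrow> 'l) \<Rightarrow> ('l \<Rightarrow> 'l \<Rightarrow> 'l) \<Rightarrow> bool" where
  "crl tn imp \<longleftrightarrow>
     (\<forall>a b. tn a b = tn b a) \<and>
     (\<forall>a b c. tn (tn a b) c = tn a (tn b c)) \<and>
     (\<forall>a. tn a top = a) \<and>
     (\<forall>a B. tn a (Sup B) = Sup ((\<lambda>b. tn a b) ` B)) \<and>
     (\<forall>a b c. tn a b \<le> c \<longleftrightarrow> a \<le> imp b c)"

text \<open>Elements of L^X are represented as functions 'a => 'l that are bot (= 0)
  outside X.\<close>
definition LSet :: "'a set \<Rightarrow> ('a \<Rightarrow> 'l::complete_lattice) set" where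
  "LSet X = {\<mu>. \<forall>x. x \<notin> X \<longrightarrow> \<mu> x = bot}"

definition restr :: "'a set \<Rightarrow> ('a \<Rightarrow> 'l::complete_lattice) \<Rightarrow> 'a \<Rightarrow> 'l" where
  "restr X' \<mu> = (\<lambda>x. if x \<in> X' then \<mu> x else bot)"

definition ext0 :: "'a set \<Rightarrow> ('a \<Rightarrow> 'l::complete_lattice) \<Rightarrow> 'a \<Rightarrow> 'l" where
  "ext0 X' \<mu>' = (\<lambda>x. if x \<in> X' then \<mu>' x else bot)"

definition upE :: "('l::complete_lattice \<Rightarrow> 'l \<Rightarrow> 'l) \<Rightarrow> 'a set \<Rightarrow> 'b set \<Rightarrow> ('a \<Rightarrow> 'b \<Rightarrow> 'l)
    \<Rightarrow> ('a \<Rightarrow> 'l) \<Rightarrow> 'b \<Rightarrow> 'l" where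
  "upE tn X Y phi \<mu> = (\<lambda>y. if y \<in> Y then (SUP x\<in>X. tn (\<mu> x) (phi x y)) else bot)"

definition downA :: "('l::complete_lattice \<Rightarrow> 'l \<Rightarrow> 'l) \<Rightarrow> 'a set \<Rightarrow> 'b set \<Rightarrow> ('a \<Rightarrow> 'b \<Rightarrow> 'l)
    \<Rightarrow> ('b \<Rightarrow> 'l) \<Rightarrow> 'a \<Rightarrow> 'l" where
  "downA imp X Y phi lam = (\<lambda>x. if x \<in> X then (INF y\<in>Y. imp (phi x y) (lam y)) else bot)"

definition clo where
  "clo tn imp X Y phi \<mu> = downA imp X Y phi (upE tn X Y phi \<mu>)"

definition Kc :: "('l::complete_lattice \<Rightarrow> 'l \<Rightarrow> 'l) \<Rightarrow> ('l \<Rightarrow> 'l \<Rightarrow> 'l) \<Rightarrow> 'a set \<Rightarrow> 'b set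
    \<Rightarrow> ('a \<Rightarrow> 'b \<Rightarrow> 'l) \<Rightarrow> ('a \<Rightarrow> 'l) set" where
  "Kc tn imp X Y phi = {\<mu> \<in> LSet X. clo tn imp X Y phi \<mu> = \<mu>}"

definition Lord :: "('l::complete_lattice \<Rightarrow> 'l \<Rightarrow> 'l) \<Rightarrow> 'a set \<Rightarrow> ('a \<Rightarrow> 'l) \<Rightarrow> ('a \<Rightarrow> 'l) \<Rightarrow> 'l" where
  "Lord imp X \<mu> \<mu>' = (INF x\<in>X. imp (\<mu> x) (\<mu>' x))"

definition Liso :: "('l::complete_lattice \<Rightarrow> 'l \<Rightarrow> 'l) \<Rightarrow> 'a set \<Rightarrow> ('a \<Rightarrow> 'l) set \<Rightarrow> 'c set \<Rightarrow> ('c \<Rightarrow> 'l) set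
    \<Rightarrow> (('a \<Rightarrow> 'l) \<Rightarrow> ('c \<Rightarrow> 'l)) \<Rightarrow> bool" where
  "Liso imp X1 P X2 Q f \<longleftrightarrow> bij_betw f P Q \<and>
     (\<forall>p\<in>P. \<forall>p'\<in>P. Lord imp X1 p p' = Lord imp X2 (f p) (f p'))"

end

theory Submission
  imports Defs
begin

locale crlL =
  fixes tn imp :: "'l::complete_lattice \<Rightarrow> 'l \<Rightarrow> 'l"
  assumes crl: "crl tn imp"
begin

lemma comm: "tn a b = tn b a" using crl unfolding crl_def by blast
lemma assoc: "tn (tn a b) c = tn a (tn b c)" using crl unfolding crl_def by blast
lemma unit: "tn a top = a" using crl unfolding crl_def by blast
lemma tsup: "tn a (Sup B) = Sup ((\<lambda>b. tn a b) ` B)" using crl unfolding crl_def by blast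
lemma res: "tn a b \<le> c \<longleftrightarrow> a \<le> imp b c" using crl unfolding crl_def by blast

lemma tn_bot: "tn a bot = bot"
  using tsup[of a "{}"] by simp
lemma tn_bot1: "tn bot a = bot"
  using tn_bot comm by metis

lemma tn_mono: "b \<le> b' \<Longrightarrow> tn a b \<le> tn a b'"
proof -
  assume "b \<le> b'"
  then have "Sup {b, b'} = b'" by (simp add: sup_absorb2)
  then have "tn a b' = Sup {tn a b, tn a b'}" using tsup[of a "{b,b'}"] by simp
  then show ?thesis by (metis Sup_insert sup.cobounded1)
qed

lemma tn_mono1: "a \<le> a' \<Longrightarrow> tn a b \<le> tn a' b"
  using tn_mono comm by metis

lemma tsup_img: "tn a (SUP x\<in>X. f x) = (SUP x\<in>X. tn a (f x))"
  using tsup[of a "f ` X"] by (simp add: image_image)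

lemma mp: "tn (imp b c) b \<le> c" using res by blast

lemma imp_top_iff: "top \<le> imp a b \<longleftrightarrow> a \<le> b"
  using res[of top a b] comm unit by metis

lemma imp_anti: "a \<le> a' \<Longrightarrow> imp a' b \<le> imp a b"
  by (meson mp order_trans res tn_mono)

lemma imp_mono: "b \<le> b' \<Longrightarrow> imp a b \<le> imp a b'"
  by (meson mp order_trans res)

lemma imp_bot: "imp bot b = top"
  by (simp add: imp_top_iff top_le)

lemma up_ext: "X' \<subseteq> X \<Longrightarrow> upE tn X Y phi (ext0 X' m) = upE tn X' Y phi m"
  unfolding upE_def ext0_def
proof (rule ext)
  fix y assume "X' \<subseteq> X"
  have "(SUP x\<in>X. tn (if x \<in> X' then m x else bot) (phi x y)) = (SUP x\<in>X'. tn (m x) (phi x y))"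
  proof (rule antisym)
    show "(SUP x\<in>X. tn (if x \<in> X' then m x else bot) (phi x y)) \<le> (SUP x\<in>X'. tn (m x) (phi x y))"
      by (rule SUP_least) (auto simp: tn_bot1 intro: SUP_upper)
    show "(SUP x\<in>X'. tn (m x) (phi x y)) \<le> (SUP x\<in>X. tn (if x \<in> X' then m x else bot) (phi x y))"
      apply (rule SUP_least)
      subgoal for x using \<open>X' \<subseteq> X\<close>
        by (intro SUP_upper2[of x]) auto
      done
  qed
  then show "(if y \<in> Y then SUP x\<in>X. tn (if x \<in> X' then m x else bot) (phi x y) else bot) =
         (if y \<in> Y then SUP x\<in>X'. tn (m x) (phi x y) else bot)" by simp
qed

lemma restr_down: "X' \<subseteq> X \<Longrightarrow> restr X' (downA imp X Y phi l) = downA imp X' Y phi l"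
  unfolding restr_def downA_def by (rule ext) auto

lemma clo_ge: "x \<in> X \<Longrightarrow> m x \<le> clo tn imp X Y phi m x"
  unfolding clo_def downA_def
  apply simp
  apply (rule INF_greatest)
  apply (simp add: res[symmetric] upE_def)
  apply (rule SUP_upper2[of x])
  by auto

lemma up_mono: "(\<forall>x\<in>X. m x \<le> n x) \<Longrightarrow> upE tn X Y phi m y \<le> upE tn X Y phi n y"
  unfolding upE_def
  apply simp
  apply (intro impI SUP_least)
  subgoal for x by (rule SUP_upper2[of x]) (auto intro: tn_mono1)
  done

lemma down_anti: "(\<forall>y\<in>Y. l y \<le> l' y) \<Longrightarrow> downA imp X Y phi l x \<le> downA imp X Y phi l' x"
  unfolding downA_def
  apply simp
  apply (intro impI INF_greatest)
  subgoal for y by (rule INF_lower2[of y]) (auto intro: imp_mono)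
  done

lemma up_down: "y \<in> Y \<Longrightarrow> upE tn X Y phi (downA imp X Y phi l) y \<le> l y"
  unfolding upE_def downA_def
  apply simp
  apply (rule SUP_least)
  subgoal for x
    using order_trans[OF tn_mono1[of "INF y\<in>Y. imp (phi x y) (l y)" "imp (phi x y) (l y)" "phi x y"] mp]
    INF_lower[of y Y "\<lambda>y. imp (phi x y) (l y)"] by blast
  done

lemma down_up_down:
  "downA imp X Y phi (upE tn X Y phi (downA imp X Y phi l)) = downA imp X Y phi l"
proof (rule ext)
  fix x
  show "downA imp X Y phi (upE tn X Y phi (downA imp X Y phi l)) x = downA imp X Y phi l x"
  proof (cases "x \<in> X")
    case True
    show ?thesis
    proof (rule antisym)
      show "downA imp X Y phi (upE tn X Y phi (downA imp X Y phi l)) x \<le> downA imp X Y phi l x"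
        by (rule down_anti) (auto intro: up_down)
      show "downA imp X Y phi l x \<le> downA imp X Y phi (upE tn X Y phi (downA imp X Y phi l)) x"
        using clo_ge[OF True, of "downA imp X Y phi l" Y phi] unfolding clo_def .
    qed
  next
    case False
    then show ?thesis unfolding downA_def by simp
  qed
qed

lemma clo_idem: "clo tn imp X Y phi (clo tn imp X Y phi m) = clo tn imp X Y phi m"
  unfolding clo_def by (rule down_up_down)

lemma clo_LSet: "clo tn imp X Y phi m \<in> LSet X"
  unfolding clo_def downA_def LSet_def by auto

lemma clo_Kc: "clo tn imp X Y phi m \<in> Kc tn imp X Y phi"
  unfolding Kc_def using clo_idem[of X Y phi m] clo_LSet[of X Y phi m] by simp

lemma Lord_clo:
  assumes n: "n \<in> Kc tn imp X Y phi"
  shows "Lord imp X (clo tn imp X Y phi m) n = Lord imp X m n"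
proof (rule antisym)
  show "Lord imp X (clo tn imp X Y phi m) n \<le> Lord imp X m n"
    unfolding Lord_def
    by (rule INF_mono) (auto intro: imp_anti clo_ge)
next
  define s where "s = Lord imp X m n"
  have nc: "clo tn imp X Y phi n = n" using n unfolding Kc_def by simp
  have sx: "tn s (m x') \<le> n x'" if "x' \<in> X" for x'
  proof -
    have "s \<le> imp (m x') (n x')" unfolding s_def Lord_def using that by (rule INF_lower)
    then show ?thesis by (simp add: res)
  qed
  show "s \<le> Lord imp X (clo tn imp X Y phi m) n"
    unfolding Lord_def
  proof (rule INF_greatest)
    fix x assume x: "x \<in> X"
    have "tn s (clo tn imp X Y phi m x) \<le> clo tn imp X Y phi n x"
      unfolding clo_def downA_def using x
      apply simp
    proof (rule INF_greatest)
      fix y assume y: "y \<in> Y"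
      let ?c = "INF y\<in>Y. imp (phi x y) (upE tn X Y phi m y)"
      have c1: "tn ?c (phi x y) \<le> upE tn X Y phi m y"
        by (rule order_trans[OF tn_mono1 mp]) (rule INF_lower[OF y])
      have "tn (tn s ?c) (phi x y) = tn s (tn ?c (phi x y))" by (rule assoc)
      also have "\<dots> \<le> tn s (upE tn X Y phi m y)" by (rule tn_mono[OF c1])
      also have "\<dots> = (SUP x'\<in>X. tn s (tn (m x') (phi x' y)))"
        unfolding upE_def using y by (simp add: tsup_img)
      also have "\<dots> \<le> upE tn X Y phi n y"
        unfolding upE_def using y apply simp
        apply (rule SUP_least)
        subgoal for x' apply (rule SUP_upper2[of x'], simp)
          using sx[of x'] by (metis assoc tn_mono1)
        done
      finally show "tn s ?c \<le> imp (phi x y) (upE tn X Y phi n y)" by (simp add: res)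
    qed
    then show "s \<le> imp (clo tn imp X Y phi m x) (n x)" using nc by (simp add: res)
  qed
qed

lemma Lord_ext: "X' \<subseteq> X \<Longrightarrow> Lord imp X (ext0 X' m) n = Lord imp X' m n"
  unfolding Lord_def ext0_def
  apply (rule antisym)
   apply (rule INF_greatest)
  subgoal for x by (rule INF_lower2[of x]) auto
  apply (rule INF_greatest)
  subgoal for x by (cases "x \<in> X'") (auto intro: INF_lower simp: imp_bot)
  done

lemma Lord_restr: "Lord imp X' m (restr X' n) = Lord imp X' m n"
  unfolding Lord_def restr_def by simp

lemma clo_le_Y: "Y' \<subseteq> Y \<Longrightarrow> clo tn imp X Y phi m x \<le> clo tn imp X Y' phi m x"
  unfolding clo_def downA_def
  apply simp
  apply (intro impI INF_greatest)
  subgoal for y apply (rule INF_lower2[of y]) apply blast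
    unfolding upE_def by auto
  done

lemma Kc_sub: "Y' \<subseteq> Y \<Longrightarrow> Kc tn imp X Y' phi \<subseteq> Kc tn imp X Y phi"
proof
  fix m assume Y: "Y' \<subseteq> Y" and m: "m \<in> Kc tn imp X Y' phi"
  then have L: "m \<in> LSet X" and e: "clo tn imp X Y' phi m = m" unfolding Kc_def by auto
  have "clo tn imp X Y phi m = m"
  proof (rule ext)
    fix x show "clo tn imp X Y phi m x = m x"
    proof (cases "x \<in> X")
      case True
      then show ?thesis using clo_ge[OF True] clo_le_Y[OF Y, of X phi m x] e
        by (metis antisym)
    next
      case False
      then show ?thesis using L clo_LSet[of X Y phi m] unfolding LSet_def by auto
    qed
  qed
  then show "m \<in> Kc tn imp X Y phi" using L unfolding Kc_def by simp
qed

end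

lemma abs1:
  assumes fP: "\<forall>q\<in>Q. f q \<in> P" and gQ: "\<forall>p\<in>P. g p \<in> Q" and gf: "\<forall>q\<in>Q. g (f q) = q"
    and iso: "\<forall>q\<in>Q. \<forall>q'\<in>Q. Lord imp X' q q' = Lord imp X (f q) (f q')"
  shows "(Liso imp X P X' Q g \<longleftrightarrow> f ` Q = P) \<and> (Liso imp X' Q X P f \<longleftrightarrow> f ` Q = P)"
proof -
  have injf: "inj_on f Q"
  proof (rule inj_onI)
    fix a b assume "a \<in> Q" "b \<in> Q" "f a = f b"
    then show "a = b" using gf by metis
  qed
  have A: "Liso imp X P X' Q g \<longleftrightarrow> f ` Q = P"
  proof
    assume "Liso imp X P X' Q g"
    then have ig: "inj_on g P" unfolding Liso_def bij_betw_def by blast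
    show "f ` Q = P"
    proof
      show "f ` Q \<subseteq> P" using fP by blast
      show "P \<subseteq> f ` Q"
      proof
        fix p assume p: "p \<in> P"
        have gp: "g p \<in> Q" using gQ p by blast
        then have fgp: "f (g p) \<in> P" using fP by blast
        have "g (f (g p)) = g p" using gf gp by blast
        then have "f (g p) = p" using inj_onD[OF ig _ fgp p] by blast
        then show "p \<in> f ` Q" using gp by (metis image_eqI)
      qed
    qed
  next
    assume im: "f ` Q = P"
    have ig: "inj_on g P"
    proof (rule inj_onI)
      fix a b assume "a \<in> P" "b \<in> P" "g a = g b"
      then obtain qa qb where "qa \<in> Q" "qb \<in> Q" "a = f qa" "b = f qb" using im by blast
      then show "a = b" using gf \<open>g a = g b\<close> by simp
    qed
    have gP: "g ` P = Q"
    proof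
      show "g ` P \<subseteq> Q" using gQ by blast
      show "Q \<subseteq> g ` P"
      proof
        fix q assume "q \<in> Q"
        then have "g (f q) = q" "f q \<in> P" using gf fP by blast+
        then show "q \<in> g ` P" by (metis image_eqI)
      qed
    qed
    have "\<forall>p\<in>P. \<forall>p'\<in>P. Lord imp X p p' = Lord imp X' (g p) (g p')"
    proof (intro ballI)
      fix p p' assume "p \<in> P" "p' \<in> P"
      then obtain q q' where "q \<in> Q" "q' \<in> Q" "p = f q" "p' = f q'" using im by blast
      then show "Lord imp X p p' = Lord imp X' (g p) (g p')" using gf iso by simp
    qed
    then show "Liso imp X P X' Q g" unfolding Liso_def bij_betw_def using ig gP by blast
  qed
  have B: "Liso imp X' Q X P f \<longleftrightarrow> f ` Q = P"
    unfolding Liso_def bij_betw_def using injf iso by blast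
  show ?thesis using A B by blast
qed

lemma abs2:
  assumes hP: "\<forall>q\<in>Q. h q \<in> P" and rf: "\<forall>q\<in>Q. r (f q) = q" and rh: "\<forall>q\<in>Q. r (h q) = q"
    and im: "f ` Q = P"
  shows "h ` Q = P"
proof -
  have hf: "h q = f q" if q: "q \<in> Q" for q
  proof -
    have "h q \<in> f ` Q" using hP q im by blast
    then obtain q' where q': "q' \<in> Q" "h q = f q'" by blast
    then have "r (h q) = q'" using rf by simp
    then have "q' = q" using rh q by simp
    then show ?thesis using q' by simp
  qed
  have "h ` Q = f ` Q" by (rule image_cong) (auto simp: hf)
  then show ?thesis using im by simp
qed

theorem mainTheorem3:
  fixes tn imp :: "'l::complete_lattice \<Rightarrow> 'l \<Rightarrow> 'l"
    and X X' :: "'a set" and Y Y' :: "'b set" and phi :: "'a \<Rightarrow> 'b \<Rightarrow> 'l"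
  assumes "crl tn imp" and "X' \<subseteq> X" and "Y' \<subseteq> Y"
  defines "S1 \<equiv> (\<lambda>\<mu>. clo tn imp X' Y' phi (restr X' \<mu>))"
    and "S2 \<equiv> (\<lambda>\<mu>. restr X' (clo tn imp X Y' phi \<mu>))"
    and "F1 \<equiv> (\<lambda>\<mu>'. clo tn imp X Y phi (ext0 X' \<mu>'))"
    and "F2 \<equiv> (\<lambda>\<mu>'. clo tn imp X Y' phi (ext0 X' \<mu>'))"
  shows "(Liso imp X (Kc tn imp X Y phi) X' (Kc tn imp X' Y' phi) S1
            \<longleftrightarrow> Liso imp X (Kc tn imp X Y phi) X' (Kc tn imp X' Y' phi) S2)
       \<and> (Liso imp X (Kc tn imp X Y phi) X' (Kc tn imp X' Y' phi) S2
            \<longleftrightarrow> Liso imp X' (Kc tn imp X' Y' phi) X (Kc tn imp X Y phi) F1)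
       \<and> (Liso imp X' (Kc tn imp X' Y' phi) X (Kc tn imp X Y phi) F1
            \<longleftrightarrow> Liso imp X' (Kc tn imp X' Y' phi) X (Kc tn imp X Y phi) F2)"
proof -
  interpret crlL tn imp using assms(1) by unfold_locales
  let ?K = "Kc tn imp X Y phi" and ?K' = "Kc tn imp X' Y' phi"
  note XX = assms(2) and YY = assms(3)
  have rd: "restr X' (clo tn imp X Y' phi (ext0 X' m)) = clo tn imp X' Y' phi m" for m
    unfolding clo_def using XX by (simp add: up_ext restr_down)
  have F1K: "\<forall>q\<in>?K'. F1 q \<in> ?K" unfolding F1_def by (simp add: clo_Kc)
  have F2K: "\<forall>q\<in>?K'. F2 q \<in> ?K" unfolding F2_def using Kc_sub[OF YY] clo_Kc by blast
  have rF2: "restr X' (F2 q) = q" if "q \<in> ?K'" for q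
    using that rd unfolding F2_def Kc_def by simp
  have rF1: "restr X' (F1 q) = q" if q: "q \<in> ?K'" for q
  proof (rule ext)
    fix x
    show "restr X' (F1 q) x = q x"
    proof (cases "x \<in> X'")
      case True
      have "ext0 X' q x \<le> F1 q x" unfolding F1_def using True XX by (intro clo_ge) auto
      then have a: "q x \<le> F1 q x" using True unfolding ext0_def by simp
      have "F1 q x \<le> F2 q x" unfolding F1_def F2_def by (rule clo_le_Y[OF YY])
      also have "\<dots> = q x" using fun_cong[OF rF2[OF q], of x] True by (simp add: restr_def)
      finally show ?thesis using a True unfolding restr_def by simp
    next
      case False
      then show ?thesis using q unfolding restr_def Kc_def LSet_def by simp
    qed
  qed
  have S1K: "\<forall>p\<in>?K. S1 p \<in> ?K'" unfolding S1_def by (simp add: clo_Kc)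
  have S2K: "\<forall>p\<in>?K. S2 p \<in> ?K'"
  proof
    fix p
    have e: "S2 p = downA imp X' Y' phi (upE tn X Y' phi p)"
      unfolding S2_def clo_def using XX by (simp add: restr_down)
    have "clo tn imp X' Y' phi (S2 p) = S2 p" unfolding e clo_def by (rule down_up_down)
    moreover have "S2 p \<in> LSet X'" unfolding e downA_def LSet_def by simp
    ultimately show "S2 p \<in> ?K'" unfolding Kc_def by simp
  qed
  have S1F1: "\<forall>q\<in>?K'. S1 (F1 q) = q" using rF1 unfolding S1_def Kc_def by simp
  have S2F2: "\<forall>q\<in>?K'. S2 (F2 q) = q" using rF2 unfolding S2_def F2_def by (simp add: clo_idem)
  have isoF1: "\<forall>q\<in>?K'. \<forall>q'\<in>?K'. Lord imp X' q q' = Lord imp X (F1 q) (F1 q')"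
  proof (intro ballI)
    fix q q' assume q: "q \<in> ?K'" and q': "q' \<in> ?K'"
    have "Lord imp X (F1 q) (F1 q') = Lord imp X (ext0 X' q) (F1 q')"
      unfolding F1_def by (rule Lord_clo) (simp add: clo_Kc)
    also have "\<dots> = Lord imp X' q (F1 q')" by (rule Lord_ext[OF XX])
    also have "\<dots> = Lord imp X' q (restr X' (F1 q'))" by (simp add: Lord_restr)
    also have "\<dots> = Lord imp X' q q'" using rF1[OF q'] by simp
    finally show "Lord imp X' q q' = Lord imp X (F1 q) (F1 q')" by simp
  qed
  have isoF2: "\<forall>q\<in>?K'. \<forall>q'\<in>?K'. Lord imp X' q q' = Lord imp X (F2 q) (F2 q')"
  proof (intro ballI)
    fix q q' assume q: "q \<in> ?K'" and q': "q' \<in> ?K'"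
    have "Lord imp X (F2 q) (F2 q') = Lord imp X (ext0 X' q) (F2 q')"
      unfolding F2_def by (rule Lord_clo) (simp add: clo_Kc)
    also have "\<dots> = Lord imp X' q (F2 q')" by (rule Lord_ext[OF XX])
    also have "\<dots> = Lord imp X' q (restr X' (F2 q'))" by (simp add: Lord_restr)
    also have "\<dots> = Lord imp X' q q'" using rF2[OF q'] by simp
    finally show "Lord imp X' q q' = Lord imp X (F2 q) (F2 q')" by simp
  qed
  note A1 = abs1[OF F1K S1K S1F1 isoF1]
  note A2 = abs1[OF F2K S2K S2F2 isoF2]
  have E: "F1 ` ?K' = ?K \<longleftrightarrow> F2 ` ?K' = ?K"
  proof
    assume "F1 ` ?K' = ?K"
    then show "F2 ` ?K' = ?K" using abs2[of ?K' F2 ?K "restr X'" F1] F2K rF1 rF2 by blast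
  next
    assume "F2 ` ?K' = ?K"
    then show "F1 ` ?K' = ?K" using abs2[of ?K' F1 ?K "restr X'" F2] F1K rF1 rF2 by blast
  qed
  show ?thesis using A1 A2 E by blast
qed

end
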